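(* Let $\Omega=\{\Omega_1,\dots,\Omega_N\}$ be the vertex set of a directed weighted graph with (not necessarily symmetric) weight function $d$, let $1\le n<N$, and let $r\in\{1,\dots,n\}$. Define, for $t\in\{1,\dots,n\}$, $f(t)=\max\big(MMJ(\Omega_r,\Omega_t~|~\Omega_{[1,n]}),\ d(\Omega_t,\Omega_{n+1})\big)$, and $\mathbb{X}=\{f(t): t\in\{1,\dots,n\}\}$. Then $MMJ(\Omega_r,\Omega_{n+1}~|~\Omega_{[1,n+1]})=\min(\mathbb{X})$.
   Context: $\Omega$ is a finite set of points indexed $\Omega_1,\dots,\Omega_N$, and $\Omega_{[1,n]}=\{\Omega_1,\dots,\Omega_n\}$. $d(x,y)\ge 0$ is the weight of the directed edge from $x$ to $y$ (possibly $d(x,y)\neq d(y,x)$). For a subset $S\subseteq\Omega$, a (directed) path from $i$ to $j$ in $S$ is a finite sequence of points of $S$ (at least two) starting at $i$ and ending at $j$, with no repeated points except that start and end may coincide when $i=j$. A jump of a path is $d(x,y)$ for consecutive points $x$ followed by $y$, and $max\_jump$ of a path is its largest jump. The Min-Max-Jump distance with context $S$ is $MMJ(i,j~|~S)=\min\{max\_jump(\epsilon): \epsilon \text{ a path from } i \text{ to } j \text{ in } S\}$ for $i,j\in S$, with $MMJ(i,i~|~S)=0$. *)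

theory Defs
  imports Complex_Main
begin

definition is_path :: "'a set \<Rightarrow> 'a \<Rightarrow> 'a \<Rightarrow> 'a list \<Rightarrow> bool" where
  "is_path S i j p \<longleftrightarrow> length p \<ge> 2 \<and> hd p = i \<and> last p = j \<and> set p \<subseteq> S \<and>
     (if i = j then distinct (tl p) else distinct p)"

definition max_jump :: "('a \<Rightarrow> 'a \<Rightarrow> real) \<Rightarrow> 'a list \<Rightarrow> real" where
  "max_jump d p = Max (set (map (\<lambda>(x, y). d x y) (zip p (tl p))))"

definition MMJ :: "('a \<Rightarrow> 'a \<Rightarrow> real) \<Rightarrow> 'a set \<Rightarrow> 'a \<Rightarrow> 'a \<Rightarrow> real" where
  "MMJ d S i j = (if i = j then 0 else Min {max_jump d p | p. is_path S i j p})"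

end

theory Submission
  imports Defs
begin

lemma paths_finite:
  assumes "finite S" shows "finite {p. is_path S i j p}"
proof (rule finite_subset[OF _ finite_lists_length_le[OF assms, of "card S + 1"]])
  show "{p. is_path S i j p} \<subseteq> {xs. set xs \<subseteq> S \<and> length xs \<le> card S + 1}"
  proof safe
    fix p assume p: "is_path S i j p"
    then have st: "set p \<subseteq> S" and dt: "distinct (tl p)" and ne: "p \<noteq> []"
      unfolding is_path_def by (auto split: if_splits simp: distinct_tl)
    show "x \<in> S" if "x \<in> set p" for x using that st by blast
    have "length (tl p) = card (set (tl p))" using dt by (simp add: distinct_card)
    also have "\<dots> \<le> card S" using st assms
      by (meson card_mono order_trans list.set_sel(2) ne subsetI)
    finally show "length p \<le> card S + 1" by simp
  qed
qed

lemma MMJ_set: "{max_jump d p | p. is_path S i j p} = max_jump d ` {p. is_path S i j p}"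
  by auto

lemma MMJ_le:
  assumes "finite S" "i \<noteq> j" "is_path S i j p"
  shows "MMJ d S i j \<le> max_jump d p"
  unfolding MMJ_def MMJ_set using assms paths_finite[OF assms(1)] by (auto intro!: Min_le)

lemma MMJ_ex:
  assumes "finite S" "i \<noteq> j" "i \<in> S" "j \<in> S"
  shows "\<exists>p. is_path S i j p \<and> MMJ d S i j = max_jump d p"
proof -
  have "is_path S i j [i, j]" using assms unfolding is_path_def by auto
  then have ne: "max_jump d ` {p. is_path S i j p} \<noteq> {}" by blast
  have "Min (max_jump d ` {p. is_path S i j p}) \<in> max_jump d ` {p. is_path S i j p}"
    by (rule Min_in[OF finite_imageI[OF paths_finite[OF assms(1)]] ne])
  then show ?thesis unfolding MMJ_def MMJ_set using assms(2) by auto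
qed

lemma zip_snoc: "p \<noteq> [] \<Longrightarrow> zip (p @ [z]) (tl (p @ [z])) = zip p (tl p) @ [(last p, z)]"
proof (induction p)
  case Nil then show ?case by simp
next
  case (Cons a q)
  then show ?case by (cases q) auto
qed

lemma max_jump_snoc_ge: assumes "q \<noteq> []" shows "d (last q) z \<le> max_jump d (q @ [z])"
  unfolding max_jump_def zip_snoc[OF assms] by simp

lemma max_jump_snoc: "length q \<ge> 2 \<Longrightarrow> max_jump d (q @ [z]) = max (max_jump d q) (d (last q) z)"
proof -
  assume l: "length q \<ge> 2"
  then have ne: "q \<noteq> []" by auto
  from l obtain a b r where "q = a # b # r" by (metis Suc_le_length_iff numeral_2_eq_2)
  then have "zip q (tl q) \<noteq> []" by simp
  then show ?thesis unfolding max_jump_def zip_snoc[OF ne]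
    by (simp add: Max_insert max.commute)
qed

theorem theorem6p1:
  fixes \<Omega> :: "nat \<Rightarrow> 'a" and d :: "'a \<Rightarrow> 'a \<Rightarrow> real" and N n r :: nat
  assumes "inj_on \<Omega> {1..N}"
    and "\<forall>x\<in>\<Omega> ` {1..N}. \<forall>y\<in>\<Omega> ` {1..N}. d x y \<ge> 0"
    and "1 \<le> n" and "n < N" and "r \<in> {1..n}"
  shows "MMJ d (\<Omega> ` {1..n+1}) (\<Omega> r) (\<Omega> (n+1)) =
         Min {max (MMJ d (\<Omega> ` {1..n}) (\<Omega> r) (\<Omega> t)) (d (\<Omega> t) (\<Omega> (n+1))) | t. t \<in> {1..n}}"
proof -
  define S1 where "S1 = \<Omega> ` {1..n}"
  define S2 where "S2 = \<Omega> ` {1..n+1}"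
  define a where "a = \<Omega> r"
  define b where "b = \<Omega> (n+1)"
  define f where "f t = max (MMJ d S1 a (\<Omega> t)) (d (\<Omega> t) b)" for t
  have S2: "S2 = insert b S1" unfolding S1_def S2_def b_def
    by (simp add: atLeastAtMostSuc_conv)
  have fin1: "finite S1" and fin2: "finite S2" unfolding S1_def S2_def by auto
  have bS1: "b \<notin> S1"
  proof
    assume "b \<in> S1"
    then obtain t where t: "t \<in> {1..n}" "\<Omega> (n+1) = \<Omega> t" unfolding S1_def b_def by auto
    have "n + 1 \<in> {1..N}" "t \<in> {1..N}" using t(1) assms(4) by auto
    then have "n + 1 = t" using inj_onD[OF assms(1) t(2)] by blast
    then show False using t(1) by simp
  qed
  have aS1: "a \<in> S1" unfolding S1_def a_def using assms(5) by auto
  have ab: "a \<noteq> b" using aS1 bS1 by auto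
  have ti: "\<Omega> t \<in> S1" if "t \<in> {1..n}" for t using that unfolding S1_def by auto
  have inN: "\<Omega> t \<in> \<Omega> ` {1..N}" if "t \<in> {1..n+1}" for t using that assms(4) by auto
  have "\<Omega> r \<in> \<Omega> ` {1..N}" "\<Omega> (n+1) \<in> \<Omega> ` {1..N}" using inN assms(5) by auto
  then have dnn: "0 \<le> d a b" using assms(2) unfolding a_def b_def by auto
  have A: "MMJ d S2 a b \<le> f t" if t: "t \<in> {1..n}" for t
  proof (cases "\<Omega> t = a")
    case True
    have "is_path S2 a b [a, b]" using ab aS1 S2 unfolding is_path_def by auto
    then have "MMJ d S2 a b \<le> max_jump d [a, b]" by (rule MMJ_le[OF fin2 ab])
    also have "\<dots> = d a b" by (simp add: max_jump_def)
    finally show ?thesis unfolding f_def using True by simp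
  next
    case False
    obtain p where p: "is_path S1 a (\<Omega> t) p" "MMJ d S1 a (\<Omega> t) = max_jump d p"
      using MMJ_ex[OF fin1 False[symmetric] aS1 ti[OF t], of d] by blast
    have l: "length p \<ge> 2" and hp: "hd p = a" and lp: "last p = \<Omega> t" and sp: "set p \<subseteq> S1"
      and dp: "distinct p" using p(1) False unfolding is_path_def by auto
    have "is_path S2 a b (p @ [b])" unfolding is_path_def 
    proof (intro conjI)
      show "set (p @ [b]) \<subseteq> S2" using sp S2 by auto
      show "if a = b then distinct (tl (p @ [b])) else distinct (p @ [b])"
        using ab dp bS1 sp by auto
    qed (use l hp in \<open>auto simp: hd_append\<close>)
    then have "MMJ d S2 a b \<le> max_jump d (p @ [b])" by (rule MMJ_le[OF fin2 ab])
    also have "\<dots> = f t" unfolding f_def using max_jump_snoc[OF l] p(2) lp by simp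
    finally show ?thesis .
  qed
  have B: "\<exists>t\<in>{1..n}. f t \<le> MMJ d S2 a b"
  proof -
    obtain p where p: "is_path S2 a b p" "MMJ d S2 a b = max_jump d p"
      using MMJ_ex[OF fin2 ab, of d] aS1 S2 by blast
    have l: "length p \<ge> 2" and hp: "hd p = a" and lp: "last p = b" and sp: "set p \<subseteq> S2"
      and dp: "distinct p" using p(1) ab unfolding is_path_def by auto
    define q where "q = butlast p"
    have pq: "p = q @ [b]" unfolding q_def using l lp
      by (metis append_butlast_last_id list.size(3) not_numeral_le_zero)
    have qne: "q \<noteq> []" using l pq by auto
    have hq: "hd q = a" using hp pq qne by simp
    have bq: "b \<notin> set q" using dp pq by simp
    have sq: "set q \<subseteq> S1" using sp pq bq S2 by auto
    have dq: "distinct q" using dp pq by simp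
    obtain t where t: "t \<in> {1..n}" "last q = \<Omega> t"
      using sq qne last_in_set[OF qne] unfolding S1_def by blast
    have ge: "d (\<Omega> t) b \<le> max_jump d p" using max_jump_snoc_ge[OF qne] pq t by metis
    show ?thesis
    proof (cases "\<Omega> t = a")
      case True
      then have "f t = d a b" unfolding f_def MMJ_def using dnn by simp
      then show ?thesis using ge True p(2) t(1) by (metis order.refl)
    next
      case False
      have lq: "length q \<ge> 2"
      proof (rule ccontr)
        assume "\<not> 2 \<le> length q"
        then have "length q = 1" using qne by (cases q) (auto simp: Suc_le_eq)
        then obtain x where "q = [x]" by (metis One_nat_def length_0_conv length_Suc_conv)
        then show False using hq t(2) False by simp
      qed
      have "is_path S1 a (\<Omega> t) q" unfolding is_path_def using lq hq t(2) sq dq False by (auto simp: distinct_tl)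
      then have "MMJ d S1 a (\<Omega> t) \<le> max_jump d q" by (rule MMJ_le[OF fin1 False[symmetric]])
      moreover have "max_jump d p = max (max_jump d q) (d (\<Omega> t) b)"
        using max_jump_snoc[OF lq] pq t(2) by simp
      ultimately have "f t \<le> MMJ d S2 a b" unfolding f_def using p(2) by simp
      then show ?thesis using t(1) by blast
    qed
  qed
  have F: "{max (MMJ d (\<Omega> ` {1..n}) (\<Omega> r) (\<Omega> t)) (d (\<Omega> t) (\<Omega> (n+1))) | t. t \<in> {1..n}}
       = f ` {1..n}" unfolding f_def S1_def a_def b_def by auto
  have finF: "finite (f ` {1..n})" by simp
  have neF: "f ` {1..n} \<noteq> {}" using assms(3) by auto
  have "MMJ d S2 a b = Min (f ` {1..n})"
  proof (rule antisym)
    obtain t where "t \<in> {1..n}" "Min (f ` {1..n}) = f t" using Min_in[OF finF neF] by auto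
    then show "MMJ d S2 a b \<le> Min (f ` {1..n})" using A by simp
  next
    obtain t where "t \<in> {1..n}" "f t \<le> MMJ d S2 a b" using B by blast
    then show "Min (f ` {1..n}) \<le> MMJ d S2 a b" using Min_le[OF finF] by (meson image_eqI order_trans)
  qed
  then show ?thesis unfolding F unfolding S2_def a_def b_def .
qed

end
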